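(* Let $\mathcal{A}=(A,0^\mathcal{A},1^\mathcal{A},\land^\mathcal{A},\lor^\mathcal{A},\to^\mathcal{A})$ be an algebraic interpretation. (1) If $\mathcal{A}$ is consistent with $\vdash_\mathsf{IPC}$, then $\mathcal{A}$ is a Heyting algebra. (2) If $\mathcal{A}$ is consistent with $\vdash_\mathsf{CPC}$, then, defining $a'=a\to^\mathcal{A}0^\mathcal{A}$, the structure $(A,0^\mathcal{A},1^\mathcal{A},\land^\mathcal{A},\lor^\mathcal{A},')$ is a Boolean algebra.
   Context: The language is generated from a countably infinite set $\mathit{Prop}$ of variables by $\bot,\top,\land,\lor,\to$; $\vdash_\mathsf{IPC}$ and $\vdash_\mathsf{CPC}$ are the intuitionistic and classical propositional consequence relations. An algebraic interpretation is any structure $\mathcal{A}=(A,0^\mathcal{A},1^\mathcal{A},\land^\mathcal{A},\lor^\mathcal{A},\to^\mathcal{A})$ (two constants, three binary operations) such that the relation $a\leq^\mathcal{A}b\iff a\land^\mathcal{A}b=a$ is a partial order on $A$ having $1^\mathcal{A}$ as largest element; no other conditions are imposed. A valuation is a map $v:\mathit{Prop}\to A$, and $[\![\varphi]\!]_v$ is the value of $\varphi$ under the unique homomorphic extension of $v$ ($\bot\mapsto0^\mathcal{A}$, $\top\mapsto1^\mathcal{A}$, connectives to the corresponding operations). $\mathcal{A}$ is consistent with $\vdash$ if whenever $\psi_1,\ldots,\psi_n\vdash\varphi$, for every valuation $v$ and every $c\in A$, if $c\leq^\mathcal{A}[\![\psi_i]\!]_v$ for all $i=1,\ldots,n$ then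 $c\leq^\mathcal{A}[\![\varphi]\!]_v$ (for $n=0$ this means $[\![\varphi]\!]_v=1^\mathcal{A}$). *)

theory Defs
  imports Main
begin

datatype form =
    Var nat
  | Bot
  | Top
  | And form form
  | Or form form
  | Imp form form

inductive ipc_axiom :: "form \<Rightarrow> bool" where
  K:     "ipc_axiom (Imp p (Imp q p))"
| S:     "ipc_axiom (Imp (Imp p (Imp q r)) (Imp (Imp p q) (Imp p r)))"
| AndE1: "ipc_axiom (Imp (And p q) p)"
| AndE2: "ipc_axiom (Imp (And p q) q)"
| AndI:  "ipc_axiom (Imp p (Imp q (And p q)))"
| OrI1:  "ipc_axiom (Imp p (Or p q))"
| OrI2:  "ipc_axiom (Imp q (Or p q))"
| OrE:   "ipc_axiom (Imp (Imp p r) (Imp (Imp q r) (Imp (Or p q) r)))"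
| BotE:  "ipc_axiom (Imp Bot p)"
| TopI:  "ipc_axiom Top"

inductive cpc_axiom :: "form \<Rightarrow> bool" where
  ipc: "ipc_axiom p \<Longrightarrow> cpc_axiom p"
| lem: "cpc_axiom (Or p (Imp p Bot))"

inductive derivable :: "(form \<Rightarrow> bool) \<Rightarrow> form set \<Rightarrow> form \<Rightarrow> bool" for ax where
  hyp: "p \<in> \<Gamma> \<Longrightarrow> derivable ax \<Gamma> p"
| axm: "ax p \<Longrightarrow> derivable ax \<Gamma> p"
| mp:  "derivable ax \<Gamma> (Imp p q) \<Longrightarrow> derivable ax \<Gamma> p \<Longrightarrow> derivable ax \<Gamma> q"

definition ipc_conseq :: "form list \<Rightarrow> form \<Rightarrow> bool" where
  "ipc_conseq \<psi>s \<phi> \<longleftrightarrow> derivable ipc_axiom (set \<psi>s) \<phi>"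

definition cpc_conseq :: "form list \<Rightarrow> form \<Rightarrow> bool" where
  "cpc_conseq \<psi>s \<phi> \<longleftrightarrow> derivable cpc_axiom (set \<psi>s) \<phi>"

definition alg_le :: "('a \<Rightarrow> 'a \<Rightarrow> 'a) \<Rightarrow> 'a \<Rightarrow> 'a \<Rightarrow> bool" where
  "alg_le meet a b \<longleftrightarrow> meet a b = a"

definition alg_interp ::
  "'a \<Rightarrow> 'a \<Rightarrow> ('a \<Rightarrow> 'a \<Rightarrow> 'a) \<Rightarrow> ('a \<Rightarrow> 'a \<Rightarrow> 'a) \<Rightarrow> ('a \<Rightarrow> 'a \<Rightarrow> 'a) \<Rightarrow> bool" where
  "alg_interp zero one meet join imp \<longleftrightarrow>
     (\<forall>a. alg_le meet a a) \<and>
     (\<forall>a b. alg_le meet a b \<and> alg_le meet b a \<longrightarrow> a = b) \<and>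
     (\<forall>a b c. alg_le meet a b \<and> alg_le meet b c \<longrightarrow> alg_le meet a c) \<and>
     (\<forall>a. alg_le meet a one)"

primrec eval ::
  "'a \<Rightarrow> 'a \<Rightarrow> ('a \<Rightarrow> 'a \<Rightarrow> 'a) \<Rightarrow> ('a \<Rightarrow> 'a \<Rightarrow> 'a) \<Rightarrow> ('a \<Rightarrow> 'a \<Rightarrow> 'a)
     \<Rightarrow> (nat \<Rightarrow> 'a) \<Rightarrow> form \<Rightarrow> 'a" where
  "eval zero one meet join imp v (Var n) = v n"
| "eval zero one meet join imp v Bot = zero"
| "eval zero one meet join imp v Top = one"
| "eval zero one meet join imp v (And p q) =
     meet (eval zero one meet join imp v p) (eval zero one meet join imp v q)"
| "eval zero one meet join imp v (Or p q) =
     join (eval zero one meet join imp v p) (eval zero one meet join imp v q)"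
| "eval zero one meet join imp v (Imp p q) =
     imp (eval zero one meet join imp v p) (eval zero one meet join imp v q)"

definition consistent_with ::
  "(form list \<Rightarrow> form \<Rightarrow> bool) \<Rightarrow>
   'a \<Rightarrow> 'a \<Rightarrow> ('a \<Rightarrow> 'a \<Rightarrow> 'a) \<Rightarrow> ('a \<Rightarrow> 'a \<Rightarrow> 'a) \<Rightarrow> ('a \<Rightarrow> 'a \<Rightarrow> 'a) \<Rightarrow> bool" where
  "consistent_with conseq zero one meet join imp \<longleftrightarrow>
     (\<forall>\<psi>s \<phi>. conseq \<psi>s \<phi> \<longrightarrow>
        (\<forall>v c. (\<forall>\<psi>\<in>set \<psi>s. alg_le meet c (eval zero one meet join imp v \<psi>)) \<longrightarrow>
               alg_le meet c (eval zero one meet join imp v \<phi>)))"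

definition heyting_algebra ::
  "'a \<Rightarrow> 'a \<Rightarrow> ('a \<Rightarrow> 'a \<Rightarrow> 'a) \<Rightarrow> ('a \<Rightarrow> 'a \<Rightarrow> 'a) \<Rightarrow> ('a \<Rightarrow> 'a \<Rightarrow> 'a) \<Rightarrow> bool" where
  "heyting_algebra zero one meet join imp \<longleftrightarrow>
     semilattice meet \<and> semilattice join \<and>
     (\<forall>a b. meet a (join a b) = a) \<and>
     (\<forall>a b. join a (meet a b) = a) \<and>
     (\<forall>a. join zero a = a) \<and>
     (\<forall>a. meet one a = a) \<and>
     (\<forall>a b c. alg_le meet c (imp a b) \<longleftrightarrow> alg_le meet (meet c a) b)"

end

theory Submission imports Defs begin
abbreviation d where "d \<equiv> derivable ipc_axiom"

lemma weaken: "d \<Gamma> p \<Longrightarrow> \<Gamma> \<subseteq> \<Delta> \<Longrightarrow> d \<Delta> p"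
  by (induction rule: derivable.induct) (auto intro: derivable.intros)

lemma idt: "d \<Gamma> (Imp p p)"
proof -
  have 1: "d \<Gamma> (Imp (Imp p (Imp (Imp p p) p)) (Imp (Imp p (Imp p p)) (Imp p p)))"
    by (rule derivable.axm, rule ipc_axiom.S)
  have 2: "d \<Gamma> (Imp p (Imp (Imp p p) p))" by (rule derivable.axm, rule ipc_axiom.K)
  have 3: "d \<Gamma> (Imp p (Imp p p))" by (rule derivable.axm, rule ipc_axiom.K)
  show ?thesis using derivable.mp[OF derivable.mp[OF 1 2] 3] .
qed

lemma ax1: "ipc_axiom a \<Longrightarrow> d \<Gamma> a" by (rule derivable.axm)

lemma mp2: "ipc_axiom (Imp a (Imp b c)) \<Longrightarrow> d \<Gamma> a \<Longrightarrow> d \<Gamma> b \<Longrightarrow> d \<Gamma> c"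
  by (meson derivable.axm derivable.mp)
lemma mp1: "ipc_axiom (Imp a c) \<Longrightarrow> d \<Gamma> a \<Longrightarrow> d \<Gamma> c"
  by (meson derivable.axm derivable.mp)

lemma ded: "d (insert p \<Gamma>) q \<Longrightarrow> d \<Gamma> (Imp p q)"
proof (induction "insert p \<Gamma>" q rule: derivable.induct)
  case (hyp q)
  then show ?case
  proof
    assume "q = p" then show ?thesis using idt by simp
  next
    assume "q \<in> \<Gamma>"
    then show ?thesis by (intro mp1[OF ipc_axiom.K] derivable.hyp)
  qed
next
  case (axm q)
  then show ?case by (intro mp1[OF ipc_axiom.K] derivable.axm)
next
  case (mp q r)
  then show ?case using mp2[OF ipc_axiom.S] by blast
qed

lemma cut: "d \<Gamma> p \<Longrightarrow> d (insert p \<Gamma>) r \<Longrightarrow> d \<Gamma> r"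
  using ded derivable.mp by blast

lemma Ax: "p \<in> \<Gamma> \<Longrightarrow> d \<Gamma> p" by (rule derivable.hyp)
lemma RAnd: "d \<Gamma> p \<Longrightarrow> d \<Gamma> q \<Longrightarrow> d \<Gamma> (And p q)"
  by (rule mp2[OF ipc_axiom.AndI])
lemma LAnd: "And p q \<in> \<Gamma> \<Longrightarrow> d (insert p (insert q \<Gamma>)) r \<Longrightarrow> d \<Gamma> r"
  by (meson cut weaken subset_insertI Ax mp1 ipc_axiom.AndE1 ipc_axiom.AndE2)
lemma ROr1: "d \<Gamma> p \<Longrightarrow> d \<Gamma> (Or p q)" by (rule mp1[OF ipc_axiom.OrI1])
lemma ROr2: "d \<Gamma> q \<Longrightarrow> d \<Gamma> (Or p q)" by (rule mp1[OF ipc_axiom.OrI2])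
lemma RImp: "d (insert p \<Gamma>) q \<Longrightarrow> d \<Gamma> (Imp p q)" by (rule ded)
lemma LOr: "Or p q \<in> \<Gamma> \<Longrightarrow> d (insert p \<Gamma>) r \<Longrightarrow> d (insert q \<Gamma>) r \<Longrightarrow> d \<Gamma> r"
  by (meson Ax ded derivable.mp mp2 ipc_axiom.OrE)
lemma LImp: "Imp p q \<in> \<Gamma> \<Longrightarrow> d \<Gamma> p \<Longrightarrow> d (insert q \<Gamma>) r \<Longrightarrow> d \<Gamma> r"
  by (meson Ax cut derivable.mp)
lemma LBot: "Bot \<in> \<Gamma> \<Longrightarrow> d \<Gamma> r" by (rule mp1[OF ipc_axiom.BotE], rule Ax)
lemma RTop: "d \<Gamma> Top" by (rule ax1, rule ipc_axiom.TopI)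

lemmas seq = Ax RAnd RImp RTop LBot


lemma AX: "p \<in> \<Gamma> \<Longrightarrow> d \<Gamma> p" by (rule derivable.hyp)
lemma LAnd1: "d (insert p (insert q \<Gamma>)) r \<Longrightarrow> d (insert (And p q) \<Gamma>) r"
  by (rule LAnd[OF insertI1], rule weaken, assumption, blast)
lemma LOr1: "d (insert p \<Gamma>) r \<Longrightarrow> d (insert q \<Gamma>) r \<Longrightarrow> d (insert (Or p q) \<Gamma>) r"
  by (rule LOr[OF insertI1]; rule weaken, assumption, blast)

lemma e1: "d {And x y} (And y x)"
  by (rule LAnd1, rule RAnd; rule AX, simp)
lemma e2a: "d {And (And x y) z} (And x (And y z))"
  by (rule LAnd1, rule LAnd1, intro RAnd; rule AX, simp)
lemma e2b: "d {And x (And y z)} (And (And x y) z)"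
  by (rule LAnd1, rule LAnd[of y z], simp, intro RAnd; rule AX, simp)
lemma e3a: "d {And x x} x" by (rule LAnd1, rule AX, simp)
lemma e3b: "d {x} (And x x)" by (rule RAnd; rule AX, simp)
lemma e4: "d {Or x y} (Or y x)"
  by (rule LOr1; (rule ROr1 ROr2, rule AX, simp)?; rule ROr1, rule AX, simp)
lemma e5a: "d {Or (Or x y) z} (Or x (Or y z))"
  apply (rule LOr1, rule LOr1)
  apply (rule ROr1, rule AX, simp)
  apply (rule ROr2, rule ROr1, rule AX, simp)
  apply (rule ROr2, rule ROr2, rule AX, simp)
  done
lemma e5b: "d {Or x (Or y z)} (Or (Or x y) z)"
  apply (rule LOr1, rule ROr1, rule ROr1, rule AX, simp)
  apply (rule LOr1)
  apply (rule ROr1, rule ROr2, rule AX, simp)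
  apply (rule ROr2, rule AX, simp)
  done
lemma e6a: "d {Or x x} x" by (rule LOr1; rule AX, simp)
lemma e6b: "d {x} (Or x x)" by (rule ROr1, rule AX, simp)
lemma e7a: "d {And x (Or x y)} x" by (rule LAnd1, rule AX, simp)
lemma e7b: "d {x} (And x (Or x y))" by (rule RAnd, rule AX, simp, rule ROr1, rule AX, simp)
lemma e8a: "d {Or x (And x y)} x" by (rule LOr1, rule AX, simp, rule LAnd1, rule AX, simp)
lemma e8b: "d {x} (Or x (And x y))" by (rule ROr1, rule AX, simp)
lemma e9a: "d {Or Bot x} x" by (rule LOr1, rule LBot, simp, rule AX, simp)
lemma e9b: "d {x} (Or Bot x)" by (rule ROr2, rule AX, simp)
lemma e10a: "d {And Top x} x" by (rule LAnd1, rule AX, simp)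
lemma e10b: "d {x} (And Top x)" by (rule RAnd, rule RTop, rule AX, simp)
lemma e11a: "d {And x (Or y z)} (Or (And x y) (And x z))"
  apply (rule LAnd1, rule LOr[of y z], simp)
  apply (rule ROr1, rule RAnd; rule AX, simp)
  apply (rule ROr2, rule RAnd; rule AX, simp)
  done
lemma e11b: "d {Or (And x y) (And x z)} (And x (Or y z))"
  apply (rule LOr1; rule LAnd1)
  apply (rule RAnd, rule AX, simp, rule ROr1, rule AX, simp)
  apply (rule RAnd, rule AX, simp, rule ROr2, rule AX, simp)
  done
lemma e12a: "d {Or x (And y z)} (And (Or x y) (Or x z))"
  apply (rule LOr1)
  apply (rule RAnd; rule ROr1, rule AX, simp)
  apply (rule LAnd1, rule RAnd; rule ROr2, rule AX, simp)
  done
lemma e12b: "d {And (Or x y) (Or x z)} (Or x (And y z))"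
  apply (rule LAnd1, rule LOr[of x y], simp)
  apply (rule ROr1, rule AX, simp)
  apply (rule LOr[of x z], simp)
  apply (rule ROr1, rule AX, simp)
  apply (rule ROr2, rule RAnd; rule AX, simp)
  done
lemma e13a: "d {And (And z x) z} (And z x)" by (rule LAnd1, rule AX, simp)
lemma e13b: "d {And z x} (And (And z x) z)" by (rule RAnd, rule AX, simp, rule LAnd1, rule AX, simp)
lemma e14a: "d {And (And z x) x} (And z x)" by (rule LAnd1, rule AX, simp)
lemma e14b: "d {And z x} (And (And z x) x)" by (rule RAnd, rule AX, simp, rule LAnd1, rule AX, simp)
lemma e15: "d {} (Imp x x)" by (rule RImp, rule AX, simp)
lemma e16a: "d {And x (Imp x Bot)} Bot"
  by (rule LAnd1, rule LImp[of x Bot], simp, rule AX, simp, rule LBot, simp)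
lemma e16b: "d {Bot} (And x (Imp x Bot))" by (rule LBot, simp)
lemma s1: "d {Imp x y, x} y" by (rule LImp[of x y], simp, rule AX, simp, rule AX, simp)
lemma s2: "d {Imp (And z x) (And (And z x) y), z} (Imp x y)"
  apply (rule RImp, rule LImp[of "And z x" "And (And z x) y"], simp)
  apply (rule RAnd; rule AX, simp)
  apply (rule LAnd[of "And z x" y], simp, rule AX, simp)
  done

lemma cons_use:
  assumes "consistent_with conseq zero one meet join imp" "conseq \<psi>s \<phi>"
    "\<forall>\<psi>\<in>set \<psi>s. alg_le meet c (eval zero one meet join imp v \<psi>)"
  shows "alg_le meet c (eval zero one meet join imp v \<phi>)"
  using assms unfolding consistent_with_def by blast

lemma ipc_cpc: "derivable ipc_axiom \<Gamma> p \<Longrightarrow> derivable cpc_axiom \<Gamma> p"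
  by (induction rule: derivable.induct) (auto intro: derivable.intros cpc_axiom.ipc)

lemma cons_cpc_ipc:
  "consistent_with cpc_conseq zero one meet join imp \<Longrightarrow> consistent_with ipc_conseq zero one meet join imp"
  unfolding consistent_with_def ipc_conseq_def cpc_conseq_def using ipc_cpc by blast

definition V :: "'a \<Rightarrow> 'a \<Rightarrow> 'a \<Rightarrow> nat \<Rightarrow> 'a" where
  "V a b c n = (if n = 0 then a else if n = 1 then b else c)"

lemma V_simps[simp]: "V a b c 0 = a" "V a b c (Suc 0) = b" "V a b c 2 = c"
  by (simp_all add: V_def)

lemma main_ipc:
  assumes A: "alg_interp zero one meet join imp"
    and C: "consistent_with ipc_conseq zero one meet join imp"
  shows "heyting_algebra zero one meet join imp \<and> (\<forall>a. meet a (imp a zero) = zero)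
     \<and> (\<forall>a b c. meet a (join b c) = join (meet a b) (meet a c))
     \<and> (\<forall>a b c. join a (meet b c) = meet (join a b) (join a c))"
proof -
  let ?E = "eval zero one meet join imp"
  have refl: "alg_le meet a a" for a using A unfolding alg_interp_def by blast
  have anti: "alg_le meet a b \<Longrightarrow> alg_le meet b a \<Longrightarrow> a = b" for a b using A unfolding alg_interp_def by blast
  have trans: "alg_le meet a b \<Longrightarrow> alg_le meet b c \<Longrightarrow> alg_le meet a c" for a b c
    using A unfolding alg_interp_def by blast
  have top: "alg_le meet a one" for a using A unfolding alg_interp_def by blast
  have eq: "?E v p = ?E v q" if "d {p} q" "d {q} p" for p q v
  proof -
    have "alg_le meet (?E v p) (?E v q)"
      by (rule cons_use[OF C, of "[p]"]) (use that refl in \<open>auto simp: ipc_conseq_def\<close>)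
    moreover have "alg_le meet (?E v q) (?E v p)"
      by (rule cons_use[OF C, of "[q]"]) (use that refl in \<open>auto simp: ipc_conseq_def\<close>)
    ultimately show ?thesis by (rule anti)
  qed
  have thm1: "?E v p = one" if "d {} p" for p v
  proof -
    have "alg_le meet one (?E v p)"
      by (rule cons_use[OF C, of "[]"]) (use that in \<open>auto simp: ipc_conseq_def\<close>)
    then show ?thesis using top anti by blast
  qed
  define x where "x = Var 0"
  define y where "y = Var 1"
  define z where "z = Var 2"
  have Ex[simp]: "?E (V a b c) x = a" "?E (V a b c) y = b" "?E (V a b c) z = c" for a b c
    by (simp_all add: x_def y_def z_def)
  have mc: "meet a b = meet b a" for a b using eq[OF e1[of x y] e1[of y x], of "V a b b"] by simp
  have ma: "meet (meet a b) c = meet a (meet b c)" for a b c using eq[OF e2a[of x y z] e2b[of x y z], of "V a b c"] by simp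
  have mi: "meet a a = a" for a using eq[OF e3a[of x] e3b[of x], of "V a a a"] by simp
  have jc: "join a b = join b a" for a b using eq[OF e4[of x y] e4[of y x], of "V a b b"] by simp
  have ja: "join (join a b) c = join a (join b c)" for a b c using eq[OF e5a[of x y z] e5b[of x y z], of "V a b c"] by simp
  have ji: "join a a = a" for a using eq[OF e6a[of x] e6b[of x], of "V a a a"] by simp
  have ab1: "meet a (join a b) = a" for a b using eq[OF e7a[of x y] e7b[of x y], of "V a b b"] by simp
  have ab2: "join a (meet a b) = a" for a b using eq[OF e8a[of x y] e8b[of x y], of "V a b b"] by simp
  have jz: "join zero a = a" for a using eq[OF e9a[of x] e9b[of x], of "V a a a"] by simp
  have mo: "meet one a = a" for a using eq[OF e10a[of x] e10b[of x], of "V a a a"] by simp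
  have d1: "meet a (join b c) = join (meet a b) (meet a c)" for a b c
    using eq[OF e11a[of x y z] e11b[of x y z], of "V a b c"] by simp
  have d2: "join a (meet b c) = meet (join a b) (join a c)" for a b c
    using eq[OF e12a[of x y z] e12b[of x y z], of "V a b c"] by simp
  have l1: "alg_le meet (meet c a) c" for a c
    using eq[OF e13a[of z x] e13b[of z x], of "V a a c"] by (simp add: alg_le_def)
  have l2: "alg_le meet (meet c a) a" for a c
    using eq[OF e14a[of z x] e14b[of z x], of "V a a c"] by (simp add: alg_le_def)
  have ii: "imp a a = one" for a using thm1[OF e15[of x], of "V a a a"] by simp
  have nc: "meet a (imp a zero) = zero" for a using eq[OF e16a[of x] e16b[of x], of "V a a a"] by simp
  have res: "alg_le meet c (imp a b) \<longleftrightarrow> alg_le meet (meet c a) b" for a b c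
  proof
    assume h: "alg_le meet c (imp a b)"
    have "alg_le meet (meet c a) (?E (V a b c) y)"
    proof (rule cons_use[OF C, of "[Imp x y, x]"])
      show "ipc_conseq [Imp x y, x] y" using s1 by (simp add: ipc_conseq_def insert_commute)
      show "\<forall>\<psi>\<in>set [Imp x y, x]. alg_le meet (meet c a) (?E (V a b c) \<psi>)"
        using trans[OF l1 h] l2 by simp
    qed
    then show "alg_le meet (meet c a) b" by simp
  next
    assume h: "alg_le meet (meet c a) b"
    have "alg_le meet c (?E (V a b c) (Imp x y))"
    proof (rule cons_use[OF C, of "[Imp (And z x) (And (And z x) y), z]"])
      show "ipc_conseq [Imp (And z x) (And (And z x) y), z] (Imp x y)"
        using s2 by (simp add: ipc_conseq_def)
      have "imp (meet c a) (meet (meet c a) b) = one" using h ii by (simp add: alg_le_def)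
      then show "\<forall>\<psi>\<in>set [Imp (And z x) (And (And z x) y), z]. alg_le meet c (?E (V a b c) \<psi>)"
        using top refl by simp
    qed
    then show "alg_le meet c (imp a b)" by simp
  qed
  have "semilattice meet" by unfold_locales (fact ma mc mi)+
  moreover have "semilattice join" by unfold_locales (fact ja jc ji)+
  ultimately show ?thesis unfolding heyting_algebra_def
    using ab1 ab2 jz mo res nc d1 d2 by (intro conjI allI) assumption+
qed

theorem theorem3:
  fixes zero one :: 'a
    and meet join imp :: "'a \<Rightarrow> 'a \<Rightarrow> 'a"
  assumes "alg_interp zero one meet join imp"
  shows "(consistent_with ipc_conseq zero one meet join imp
            \<longrightarrow> heyting_algebra zero one meet join imp)
       \<and> (consistent_with cpc_conseq zero one meet join imp
            \<longrightarrow> abstract_boolean_algebra meet join (\<lambda>a. imp a zero) zero one)"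
proof (intro conjI impI)
  assume "consistent_with ipc_conseq zero one meet join imp"
  then show "heyting_algebra zero one meet join imp" using main_ipc[OF assms] by blast
next
  assume C: "consistent_with cpc_conseq zero one meet join imp"
  have M: "heyting_algebra zero one meet join imp \<and> (\<forall>a. meet a (imp a zero) = zero)
     \<and> (\<forall>a b c. meet a (join b c) = join (meet a b) (meet a c))
     \<and> (\<forall>a b c. join a (meet b c) = meet (join a b) (join a c))"
    using main_ipc[OF assms cons_cpc_ipc[OF C]] .
  then have sm: "semilattice meet" and sj: "semilattice join"
    and jz: "\<And>a. join zero a = a" and mo: "\<And>a. meet one a = a"
    unfolding heyting_algebra_def by blast+
  have top: "alg_le meet a one" for a using assms unfolding alg_interp_def by blast
  have anti: "alg_le meet a b \<Longrightarrow> alg_le meet b a \<Longrightarrow> a = b" for a b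
    using assms unfolding alg_interp_def by blast
  have lem: "join a (imp a zero) = one" for a
  proof -
    have "alg_le meet one (eval zero one meet join imp (\<lambda>_. a) (Or (Var 0) (Imp (Var 0) Bot)))"
      by (rule cons_use[OF C, of "[]"])
         (auto simp: cpc_conseq_def intro: derivable.axm cpc_axiom.lem)
    then have "alg_le meet one (join a (imp a zero))" by simp
    then show ?thesis using top[of "join a (imp a zero)"] anti by blast
  qed
  interpret m: semilattice meet by (fact sm)
  interpret j: semilattice join by (fact sj)
  show "abstract_boolean_algebra meet join (\<lambda>a. imp a zero) zero one"
    apply unfold_locales
    using M lem jz mo m.commute j.commute by metis+
qed
end
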